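(* Let $P$ be a continuous poset. Then (i) $\overline{k[U]}\cong k[\mathrm{Int}\,U]$ for every up-set $U\subseteq P$, where $\mathrm{Int}$ is the interior in the Scott topology; (ii) $\overline{k[D]}\cong k[\mathrm{cl}\,D]$ for every down-set $D\subseteq P$, where $\mathrm{cl}$ is the closure in the Scott topology. For $P=\mathbb R^n$ with the componentwise order one also has (iii) $\underline{k[U]}\cong k[\mathrm{cl}^s U]$ for every up-set $U\subseteq\mathbb R^n$ and (iv) $\underline{k[D]}\cong k[\mathrm{Int}^s D]$ for every down-set $D\subseteq\mathbb R^n$, where $\mathrm{cl}^s$, $\mathrm{Int}^s$ denote closure and interior in the standard Euclidean topology.
   Context: Let $P$ be a poset (as a category, $p\to q$ iff $p\le q$). A subset is directed if nonempty and any two elements have an upper bound in it. $x\ll y$ means: for every directed $D$ whose supremum exists with $y\le\sup D$, some $d\in D$ satisfies $x\le d$. $P$ is continuous if for each $p$ the set $\{x:x\ll p\}$ is directed with supremum $p$ ($\mathbb R^n$ with componentwise order is continuous, with $x\ll y$ iff $x_i<y_i$ for all $i$). A set $U$ is Scott-open if it is an up-set meeting every directed set whose supremum exists and lies in $U$. $k$ is a commutative ring with unity; persistence modules are functors from $P$ to $k$-modules. For a convex $I\subseteq P$ (i.e. $x,z\in I$, $x\le y\le z$ imply $y\in I$), the indicator module $k[I]$ has $k[I]_p=k$ for $p\in I$ and $0$ otherwise, with identity internal maps between points of $I$ and zero otherwise. $\underline M_p=\varprojlim_{x\gg p}M_x$, $\overline M_p=\varinjlim_{x\ll p}M_x$.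 *)

theory Defs
  imports "HOL-Analysis.Analysis" "HOL-Algebra.Module"
begin

definition directed :: "'p::order set \<Rightarrow> bool" where
  "directed D \<longleftrightarrow> D \<noteq> {} \<and> (\<forall>x\<in>D. \<forall>y\<in>D. \<exists>z\<in>D. x \<le> z \<and> y \<le> z)"

definition is_sup :: "'p::order set \<Rightarrow> 'p \<Rightarrow> bool" where
  "is_sup D s \<longleftrightarrow> (\<forall>d\<in>D. d \<le> s) \<and> (\<forall>u. (\<forall>d\<in>D. d \<le> u) \<longrightarrow> s \<le> u)"

definition way_below :: "'p::order \<Rightarrow> 'p \<Rightarrow> bool" where
  "way_below x y \<longleftrightarrow>
     (\<forall>D s. directed D \<and> is_sup D s \<and> y \<le> s \<longrightarrow> (\<exists>d\<in>D. x \<le> d))"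

definition continuous_poset :: "'p::order itself \<Rightarrow> bool" where
  "continuous_poset _ \<longleftrightarrow>
     (\<forall>p::'p. directed {x. way_below x p} \<and> is_sup {x. way_below x p} p)"

definition up_set :: "'p::order set \<Rightarrow> bool" where
  "up_set U \<longleftrightarrow> (\<forall>x y. x \<in> U \<and> x \<le> y \<longrightarrow> y \<in> U)"

definition down_set :: "'p::order set \<Rightarrow> bool" where
  "down_set D \<longleftrightarrow> (\<forall>x y. y \<in> D \<and> x \<le> y \<longrightarrow> x \<in> D)"

definition convex_set_ord :: "'p::order set \<Rightarrow> bool" where
  "convex_set_ord I \<longleftrightarrow> (\<forall>x y z. x \<in> I \<and> z \<in> I \<and> x \<le> y \<and> y \<le> z \<longrightarrow> y \<in> I)"

definition scott_open :: "'p::order set \<Rightarrow> bool" where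
  "scott_open U \<longleftrightarrow> up_set U \<and>
     (\<forall>D s. directed D \<and> is_sup D s \<and> s \<in> U \<longrightarrow> D \<inter> U \<noteq> {})"

definition scott_topology :: "'p::order topology" where
  "scott_topology = topology scott_open"

definition linear_map ::
  "('a, 'c) ring_scheme \<Rightarrow> ('a, 'b) module \<Rightarrow> ('a, 'd) module \<Rightarrow> ('b \<Rightarrow> 'd) \<Rightarrow> bool" where
  "linear_map R M N h \<longleftrightarrow>
     (\<forall>x\<in>carrier M. h x \<in> carrier N) \<and>
     (\<forall>x\<in>carrier M. \<forall>y\<in>carrier M. h (x \<oplus>\<^bsub>M\<^esub> y) = h x \<oplus>\<^bsub>N\<^esub> h y) \<and>
     (\<forall>a\<in>carrier R. \<forall>x\<in>carrier M. h (a \<odot>\<^bsub>M\<^esub> x) = a \<odot>\<^bsub>N\<^esub> h x)"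

type_synonym ('p, 'a, 'b) pmod = "('p \<Rightarrow> ('a, 'b) module) \<times> ('p \<Rightarrow> 'p \<Rightarrow> 'b \<Rightarrow> 'b)"

definition is_pmod :: "('a, 'c) ring_scheme \<Rightarrow> ('p::order, 'a, 'b) pmod \<Rightarrow> bool" where
  "is_pmod R MF \<longleftrightarrow> (case MF of (M, F) \<Rightarrow>
     (\<forall>p. module R (M p)) \<and>
     (\<forall>p q. p \<le> q \<longrightarrow> linear_map R (M p) (M q) (F p q)) \<and>
     (\<forall>p. \<forall>x\<in>carrier (M p). F p p x = x) \<and>
     (\<forall>p q r. p \<le> q \<and> q \<le> r \<longrightarrow> (\<forall>x\<in>carrier (M p). F q r (F p q x) = F p r x)))"

definition pmod_iso :: "('a, 'c) ring_scheme \<Rightarrow> ('p::order, 'a, 'b) pmod \<Rightarrow> ('p, 'a, 'd) pmod \<Rightarrow> bool" where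
  "pmod_iso R MF NG \<longleftrightarrow> (case MF of (M, F) \<Rightarrow> case NG of (N, G) \<Rightarrow>
     (\<exists>\<eta> :: 'p \<Rightarrow> 'b \<Rightarrow> 'd.
        (\<forall>p. linear_map R (M p) (N p) (\<eta> p) \<and> bij_betw (\<eta> p) (carrier (M p)) (carrier (N p))) \<and>
        (\<forall>p q. p \<le> q \<longrightarrow> (\<forall>x\<in>carrier (M p). \<eta> q (F p q x) = G p q (\<eta> p x)))))"

definition ring_module :: "'a ring \<Rightarrow> ('a, 'a) module" where
  "ring_module R = \<lparr>carrier = carrier R, mult = mult R, one = one R,
      zero = zero R, add = add R, smult = mult R\<rparr>"

definition zero_module :: "'a ring \<Rightarrow> ('a, 'a) module" where
  "zero_module R = \<lparr>carrier = {\<zero>\<^bsub>R\<^esub>}, mult = mult R, one = one R,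
      zero = zero R, add = add R, smult = mult R\<rparr>"

definition indicator_pmod :: "'a ring \<Rightarrow> 'p::order set \<Rightarrow> ('p, 'a, 'a) pmod" where
  "indicator_pmod R I =
     ((\<lambda>p. if p \<in> I then ring_module R else zero_module R),
      (\<lambda>p q x. if p \<in> I \<and> q \<in> I then x else \<zero>\<^bsub>R\<^esub>))"

text \<open>Direct limit of (M,F) restricted to an index set J (directed in the
  intended uses): the classes of pairs (x, a), x \<in> J,
  a \<in> M x, where two pairs are identified when they become equal in
  some common upper bound in J.\<close>

definition dlim_rel :: "('p::order, 'a, 'b) pmod \<Rightarrow> 'p set \<Rightarrow> (('p \<times> 'b) \<times> ('p \<times> 'b)) set" where
  "dlim_rel MF J = (case MF of (M, F) \<Rightarrow>
     {((x, a), (y, b)). x \<in> J \<and> y \<in> J \<and> a \<in> carrier (M x) \<and> b \<in> carrier (M y) \<and>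
        (\<exists>z\<in>J. x \<le> z \<and> y \<le> z \<and> F x z a = F y z b)})"

definition dlim_module :: "('p::order, 'a, 'b) pmod \<Rightarrow> 'p set \<Rightarrow> ('a, ('p \<times> 'b) set) module" where
  "dlim_module MF J = (case MF of (M, F) \<Rightarrow>
     \<lparr>carrier = (SIGMA x:J. carrier (M x)) // dlim_rel MF J,
      mult = (\<lambda>_ _. undefined), one = undefined,
      zero = dlim_rel MF J `` {(x, \<zero>\<^bsub>M x\<^esub>) | x. x \<in> J},
      add = (\<lambda>X Y. dlim_rel MF J ``
               {(z, F x z a \<oplus>\<^bsub>M z\<^esub> F y z b) | x a y b z.
                  (x, a) \<in> X \<and> (y, b) \<in> Y \<and> z \<in> J \<and> x \<le> z \<and> y \<le> z}),
      smult = (\<lambda>c X. dlim_rel MF J `` {(x, c \<odot>\<^bsub>M x\<^esub> a) | x a. (x, a) \<in> X})\<rparr>)"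

text \<open>\<overline>M_p = colim_{x \<ll> p} M_x, with the induced maps.\<close>

definition upper_pmod :: "('p::order, 'a, 'b) pmod \<Rightarrow> ('p, 'a, ('p \<times> 'b) set) pmod" where
  "upper_pmod MF =
     ((\<lambda>p. dlim_module MF {x. way_below x p}),
      (\<lambda>p q X. dlim_rel MF {x. way_below x q} `` X))"

definition ilim_module :: "('p::order, 'a, 'b) pmod \<Rightarrow> 'p set \<Rightarrow> ('a, 'p \<Rightarrow> 'b) module" where
  "ilim_module MF J = (case MF of (M, F) \<Rightarrow>
     \<lparr>carrier = {g \<in> Pi\<^sub>E J (\<lambda>x. carrier (M x)).
                  \<forall>x\<in>J. \<forall>y\<in>J. x \<le> y \<longrightarrow> F x y (g x) = g y},
      mult = (\<lambda>_ _. undefined), one = undefined,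
      zero = (\<lambda>x\<in>J. \<zero>\<^bsub>M x\<^esub>),
      add = (\<lambda>g h. \<lambda>x\<in>J. g x \<oplus>\<^bsub>M x\<^esub> h x),
      smult = (\<lambda>c g. \<lambda>x\<in>J. c \<odot>\<^bsub>M x\<^esub> g x)\<rparr>)"

text \<open>\<underline>M_p = lim_{x \<gg> p} M_x, with the induced (restriction) maps.\<close>

definition lower_pmod :: "('p::order, 'a, 'b) pmod \<Rightarrow> ('p, 'a, 'p \<Rightarrow> 'b) pmod" where
  "lower_pmod MF =
     ((\<lambda>p. ilim_module MF {x. way_below p x}),
      (\<lambda>p q g. restrict g {x. way_below q x}))"

end

theory Submission
  imports Defs
begin


definition Cr :: "'a ring \<Rightarrow> 'p set \<Rightarrow> 'p \<Rightarrow> 'a set" where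
  "Cr R I x = (if x \<in> I then carrier R else {\<zero>\<^bsub>R\<^esub>})"

lemma ind_carrier: "carrier (fst (indicator_pmod R I) p) = Cr R I p"
  by (simp add: indicator_pmod_def ring_module_def zero_module_def Cr_def)

lemma ind_snd: "snd (indicator_pmod R I) x y a = (if x \<in> I \<and> y \<in> I then a else \<zero>\<^bsub>R\<^esub>)"
  by (simp add: indicator_pmod_def)
lemma dlim_rel_ind: "dlim_rel (indicator_pmod R I) J =
   {((x, a), (y, b)). x \<in> J \<and> y \<in> J \<and> a \<in> Cr R I x \<and> b \<in> Cr R I y \<and>
        (\<exists>z\<in>J. x \<le> z \<and> y \<le> z \<and> (if x \<in> I \<and> z \<in> I then a else \<zero>\<^bsub>R\<^esub>) = (if y \<in> I \<and> z \<in> I then b else \<zero>\<^bsub>R\<^esub>))}"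
  unfolding dlim_rel_def ind_carrier[symmetric] ind_snd[symmetric]
  by (simp add: case_prod_beta)
definition vcls :: "'a ring \<Rightarrow> 'p set \<Rightarrow> 'p set \<Rightarrow> 'a \<Rightarrow> ('p \<times> 'a) set" where
  "vcls R I J v = {(w, c). w \<in> J \<and> c \<in> Cr R I w \<and> c = v}"

lemma ind_add: "add (fst (indicator_pmod R I) p) = add R"
  by (simp add: indicator_pmod_def ring_module_def zero_module_def)

lemma ind_smult: "smult (fst (indicator_pmod R I) p) = mult R"
  by (simp add: indicator_pmod_def ring_module_def zero_module_def)

lemma mem_rel: "((x,a),(y,b)) \<in> dlim_rel (indicator_pmod R I) J \<longleftrightarrow>
   x \<in> J \<and> y \<in> J \<and> a \<in> Cr R I x \<and> b \<in> Cr R I y \<and>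
        (\<exists>z\<in>J. x \<le> z \<and> y \<le> z \<and> (if x \<in> I \<and> z \<in> I then a else \<zero>\<^bsub>R\<^esub>) = (if y \<in> I \<and> z \<in> I then b else \<zero>\<^bsub>R\<^esub>))"
  unfolding dlim_rel_ind by simp

lemma rel_A:
  assumes dir: "directed J" and up: "\<forall>x\<in>J. \<forall>y\<in>J. x \<in> I \<and> x \<le> y \<longrightarrow> y \<in> I"
  shows "((x,a),(y,b)) \<in> dlim_rel (indicator_pmod R I) J \<longleftrightarrow>
     x \<in> J \<and> y \<in> J \<and> a \<in> Cr R I x \<and> b \<in> Cr R I y \<and> a = b"
proof -
  have key: "(if x \<in> I \<and> z \<in> I then a else \<zero>\<^bsub>R\<^esub>) = a"
    if "x \<in> J" "z \<in> J" "x \<le> z" "a \<in> Cr R I x" for x z a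
  proof (cases "x \<in> I")
    case True
    then have "z \<in> I" using up that by blast
    then show ?thesis using True by simp
  next
    case False
    then show ?thesis using that(4) by (simp add: Cr_def)
  qed
  show ?thesis
  proof
    assume "((x,a),(y,b)) \<in> dlim_rel (indicator_pmod R I) J"
    then have H: "x \<in> J \<and> y \<in> J \<and> a \<in> Cr R I x \<and> b \<in> Cr R I y \<and>
        (\<exists>z\<in>J. x \<le> z \<and> y \<le> z \<and> (if x \<in> I \<and> z \<in> I then a else \<zero>\<^bsub>R\<^esub>) = (if y \<in> I \<and> z \<in> I then b else \<zero>\<^bsub>R\<^esub>))"
      by (simp only: mem_rel)
    then obtain z where z: "z \<in> J" "x \<le> z" "y \<le> z" and
      e: "(if x \<in> I \<and> z \<in> I then a else \<zero>\<^bsub>R\<^esub>) = (if y \<in> I \<and> z \<in> I then b else \<zero>\<^bsub>R\<^esub>)"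
      by (elim conjE bexE) 
    have "a = b" using e key[of x z a] key[of y z b] H z by simp
    then show "x \<in> J \<and> y \<in> J \<and> a \<in> Cr R I x \<and> b \<in> Cr R I y \<and> a = b" using H by simp
  next
    assume t: "x \<in> J \<and> y \<in> J \<and> a \<in> Cr R I x \<and> b \<in> Cr R I y \<and> a = b"
    from dir t obtain z where z: "z \<in> J" "x \<le> z" "y \<le> z" unfolding directed_def by meson
    have "(if x \<in> I \<and> z \<in> I then a else \<zero>\<^bsub>R\<^esub>) = (if y \<in> I \<and> z \<in> I then b else \<zero>\<^bsub>R\<^esub>)"
    proof -
      have "(if x \<in> I \<and> z \<in> I then a else \<zero>\<^bsub>R\<^esub>) = a" using key t z by blast
      moreover have "(if y \<in> I \<and> z \<in> I then b else \<zero>\<^bsub>R\<^esub>) = b" using key t z by blast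
      ultimately show ?thesis using t by simp
    qed
    then show "((x,a),(y,b)) \<in> dlim_rel (indicator_pmod R I) J"
      unfolding mem_rel using t z by blast
  qed
qed
lemma rel_B:
  assumes dir: "directed J" and B: "\<forall>x\<in>J. x \<in> I \<longrightarrow> (\<exists>z\<in>J. x \<le> z \<and> z \<notin> I)"
  shows "((x,a),(y,b)) \<in> dlim_rel (indicator_pmod R I) J \<longleftrightarrow>
     x \<in> J \<and> y \<in> J \<and> a \<in> Cr R I x \<and> b \<in> Cr R I y"
proof
  assume "((x,a),(y,b)) \<in> dlim_rel (indicator_pmod R I) J"
  then show "x \<in> J \<and> y \<in> J \<and> a \<in> Cr R I x \<and> b \<in> Cr R I y"
    by (simp only: mem_rel) 
next
  assume t: "x \<in> J \<and> y \<in> J \<and> a \<in> Cr R I x \<and> b \<in> Cr R I y"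
  have "\<exists>z\<in>J. x \<le> z \<and> y \<le> z \<and> z \<notin> I"
  proof -
    from dir t obtain w where w: "w \<in> J" "x \<le> w" "y \<le> w" unfolding directed_def by meson
    show ?thesis
    proof (cases "w \<in> I")
      case True
      with B w obtain z where "z \<in> J" "w \<le> z" "z \<notin> I" by blast
      with w show ?thesis by (meson order_trans)
    next
      case False with w show ?thesis by blast
    qed
  qed
  then obtain z where z: "z \<in> J" "x \<le> z" "y \<le> z" "z \<notin> I" by blast
  have "(if x \<in> I \<and> z \<in> I then a else \<zero>\<^bsub>R\<^esub>) = (if y \<in> I \<and> z \<in> I then b else \<zero>\<^bsub>R\<^esub>)"
    using z(4) by simp
  then show "((x,a),(y,b)) \<in> dlim_rel (indicator_pmod R I) J"
    unfolding mem_rel using t z by blast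
qed

lemma dlim_carrier: fixes R :: "'a ring" and I J :: "'p::order set" shows "carrier (dlim_module (indicator_pmod R I) J) =
   (SIGMA x:J. Cr R I x) // dlim_rel (indicator_pmod R I) J"
proof -
  have "carrier (dlim_module MF J) = (SIGMA x:J. carrier (fst MF x)) // dlim_rel MF J" for MF :: "('p, 'a, 'a) pmod"
    by (cases MF) (simp add: dlim_module_def)
  then show ?thesis by (simp add: ind_carrier)
qed

lemma dlim_add: fixes R :: "'a ring" and I J :: "'p::order set" shows "add (dlim_module (indicator_pmod R I) J) X Y =
   dlim_rel (indicator_pmod R I) J ``
     {(z, (if x \<in> I \<and> z \<in> I then a else \<zero>\<^bsub>R\<^esub>) \<oplus>\<^bsub>R\<^esub> (if y \<in> I \<and> z \<in> I then b else \<zero>\<^bsub>R\<^esub>)) | x a y b z.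
                  (x, a) \<in> X \<and> (y, b) \<in> Y \<and> z \<in> J \<and> x \<le> z \<and> y \<le> z}"
proof -
  have "add (dlim_module MF J) X Y = dlim_rel MF J ``
     {(z, snd MF x z a \<oplus>\<^bsub>fst MF z\<^esub> snd MF y z b) | x a y b z.
                  (x, a) \<in> X \<and> (y, b) \<in> Y \<and> z \<in> J \<and> x \<le> z \<and> y \<le> z}" for MF :: "('p, 'a, 'a) pmod"
    by (cases MF) (simp add: dlim_module_def)
  then show ?thesis by (simp only: ind_add ind_snd)
qed

lemma dlim_smult: fixes R :: "'a ring" and I J :: "'p::order set" shows "smult (dlim_module (indicator_pmod R I) J) c X =
   dlim_rel (indicator_pmod R I) J `` {(x, c \<otimes>\<^bsub>R\<^esub> a) | x a. (x, a) \<in> X}"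
proof -
  have "smult (dlim_module MF J) c X = dlim_rel MF J `` {(x, c \<odot>\<^bsub>fst MF x\<^esub> a) | x a. (x, a) \<in> X}" for MF :: "('p, 'a, 'a) pmod"
    by (cases MF) (simp add: dlim_module_def)
  then show ?thesis by (simp only: ind_smult)
qed

lemma image_A:
  fixes R :: "'a ring" and I J :: "'p::order set" and T :: "('p \<times> 'a) set"
  assumes dir: "directed J" and up: "\<forall>x\<in>J. \<forall>y\<in>J. x \<in> I \<and> x \<le> y \<longrightarrow> y \<in> I"
    and t0: "(wz, v) \<in> T" "wz \<in> J" "v \<in> Cr R I wz"
    and allv: "\<And>y b. (y, b) \<in> T \<Longrightarrow> b = v"
  shows "dlim_rel (indicator_pmod R I) J `` T = vcls R I J v"
proof (rule Set.set_eqI)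
  fix s :: "'p \<times> 'a"
  obtain w c where s: "s = (w, c)" by fastforce
  have "(w, c) \<in> dlim_rel (indicator_pmod R I) J `` T \<longleftrightarrow> (w, c) \<in> vcls R I J v"
  proof
    assume "(w, c) \<in> dlim_rel (indicator_pmod R I) J `` T"
    then obtain t where t: "t \<in> T" "(t, (w, c)) \<in> dlim_rel (indicator_pmod R I) J"
      by blast
    obtain y b where "t = (y, b)" by fastforce
    with t have "(y, b) \<in> T" "((y, b), (w, c)) \<in> dlim_rel (indicator_pmod R I) J" by auto
    then have "w \<in> J \<and> c \<in> Cr R I w \<and> b = c" "b = v"
      using allv by (simp_all add: rel_A[OF dir up])
    then show "(w, c) \<in> vcls R I J v"
      unfolding vcls_def by auto
  next
    assume "(w, c) \<in> vcls R I J v"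
    then have "((wz, v), (w, c)) \<in> dlim_rel (indicator_pmod R I) J"
      using t0 unfolding vcls_def by (auto simp add: rel_A[OF dir up])
    then show "(w, c) \<in> dlim_rel (indicator_pmod R I) J `` T" using t0 by blast
  qed
  then show "s \<in> dlim_rel (indicator_pmod R I) J `` T \<longleftrightarrow> s \<in> vcls R I J v" using s by simp
qed

lemma the_vcls:
  assumes "(x0, v) \<in> vcls R I J v"
  shows "(THE a. \<exists>x. (x, a) \<in> vcls R I J v) = v"
  using assms by (rule_tac the_equality) (auto simp: vcls_def)

lemma key_A:
  assumes up: "\<forall>x\<in>J. \<forall>y\<in>J. x \<in> I \<and> x \<le> y \<longrightarrow> y \<in> I"
    and "x \<in> J" "z \<in> J" "x \<le> z" "a \<in> Cr R I x"
  shows "(if x \<in> I \<and> z \<in> I then a else \<zero>\<^bsub>R\<^esub>) = a"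
proof (cases "x \<in> I")
  case True
  then have "z \<in> I" using up assms by blast
  then show ?thesis using True by simp
next
  case False
  then show ?thesis using assms(5) by (simp add: Cr_def)
qed

lemma Cr_sub: "ring R \<Longrightarrow> Cr R I x \<subseteq> carrier R"
  by (auto simp: Cr_def ring.ring_simprules)

lemma zero_Cr: "ring R \<Longrightarrow> \<zero>\<^bsub>R\<^esub> \<in> Cr R I x"
  by (auto simp: Cr_def ring.ring_simprules)

lemma x0_vcls: "x0 \<in> J \<Longrightarrow> x0 \<in> I \<Longrightarrow> a \<in> carrier R \<Longrightarrow> (x0, a) \<in> vcls R I J a"
  by (simp add: vcls_def Cr_def)

lemma upper_A_carrier:
  fixes R :: "'a ring" and I J :: "'p::order set"
  assumes R: "ring R" and dir: "directed J" and up: "\<forall>x\<in>J. \<forall>y\<in>J. x \<in> I \<and> x \<le> y \<longrightarrow> y \<in> I"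
    and x0: "x0 \<in> J" "x0 \<in> I"
  shows "carrier (dlim_module (indicator_pmod R I) J) = vcls R I J ` carrier R"
proof -
  have cls: "dlim_rel (indicator_pmod R I) J `` {(x, a)} = vcls R I J a" if "x \<in> J" "a \<in> Cr R I x" for x a
    by (rule image_A[OF dir up, where wz=x]) (use that in simp_all)
  show ?thesis
  proof (rule equalityI)
    show "carrier (dlim_module (indicator_pmod R I) J) \<subseteq> vcls R I J ` carrier R"
    proof
      fix X assume "X \<in> carrier (dlim_module (indicator_pmod R I) J)"
      then obtain s where s: "s \<in> (SIGMA x:J. Cr R I x)" "X = dlim_rel (indicator_pmod R I) J `` {s}"
        unfolding dlim_carrier by (rule quotientE)
      obtain x a where xa: "s = (x, a)" by fastforce
      with s have xJ: "x \<in> J" "a \<in> Cr R I x" by auto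
      then have "X = vcls R I J a" using s(2) xa cls by simp
      moreover have "a \<in> carrier R" by (rule subsetD[OF Cr_sub[OF R] xJ(2)])
      ultimately show "X \<in> vcls R I J ` carrier R" by (rule image_eqI)
    qed
  next
    show "vcls R I J ` carrier R \<subseteq> carrier (dlim_module (indicator_pmod R I) J)"
    proof
      fix X assume "X \<in> vcls R I J ` carrier R"
      then obtain a where a: "a \<in> carrier R" "X = vcls R I J a" by blast
      have "(x0, a) \<in> (SIGMA x:J. Cr R I x)" using x0 a by (simp add: Cr_def)
      moreover have "X = dlim_rel (indicator_pmod R I) J `` {(x0, a)}"
        using a x0 cls by (simp add: Cr_def)
      ultimately show "X \<in> carrier (dlim_module (indicator_pmod R I) J)"
        unfolding dlim_carrier by (simp add: quotientI)
    qed
  qed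
qed

lemma upper_A_add:
  fixes R :: "'a ring" and I J :: "'p::order set"
  assumes R: "ring R" and dir: "directed J" and up: "\<forall>x\<in>J. \<forall>y\<in>J. x \<in> I \<and> x \<le> y \<longrightarrow> y \<in> I"
    and x0: "x0 \<in> J" "x0 \<in> I" and a: "a \<in> carrier R" and b: "b \<in> carrier R"
  shows "add (dlim_module (indicator_pmod R I) J) (vcls R I J a) (vcls R I J b) = vcls R I J (a \<oplus>\<^bsub>R\<^esub> b)"
  unfolding dlim_add
proof (rule image_A[OF dir up, where wz = x0])
  show "x0 \<in> J" by fact
  show "a \<oplus>\<^bsub>R\<^esub> b \<in> Cr R I x0" using x0 a b R by (simp add: Cr_def ring.ring_simprules)
  have "\<exists>x a' y b' z. (x0, a \<oplus>\<^bsub>R\<^esub> b) = (z, (if x \<in> I \<and> z \<in> I then a' else \<zero>\<^bsub>R\<^esub>) \<oplus>\<^bsub>R\<^esub> (if y \<in> I \<and> z \<in> I then b' else \<zero>\<^bsub>R\<^esub>))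
      \<and> (x, a') \<in> vcls R I J a \<and> (y, b') \<in> vcls R I J b \<and> z \<in> J \<and> x \<le> z \<and> y \<le> z"
    apply (rule exI[of _ x0], rule exI[of _ a], rule exI[of _ x0], rule exI[of _ b], rule exI[of _ x0])
    using x0 a b by (simp add: x0_vcls)
  then show "(x0, a \<oplus>\<^bsub>R\<^esub> b) \<in> {(z, (if x \<in> I \<and> z \<in> I then a' else \<zero>\<^bsub>R\<^esub>) \<oplus>\<^bsub>R\<^esub> (if y \<in> I \<and> z \<in> I then b' else \<zero>\<^bsub>R\<^esub>)) | x a' y b' z.
                  (x, a') \<in> vcls R I J a \<and> (y, b') \<in> vcls R I J b \<and> z \<in> J \<and> x \<le> z \<and> y \<le> z}"
    by (simp only: mem_Collect_eq)
next
  fix y' c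
  assume "(y', c) \<in> {(z, (if x \<in> I \<and> z \<in> I then a' else \<zero>\<^bsub>R\<^esub>) \<oplus>\<^bsub>R\<^esub> (if y \<in> I \<and> z \<in> I then b' else \<zero>\<^bsub>R\<^esub>)) | x a' y b' z.
                  (x, a') \<in> vcls R I J a \<and> (y, b') \<in> vcls R I J b \<and> z \<in> J \<and> x \<le> z \<and> y \<le> z}"
  then obtain x a' y b' z where h: "(y', c) = (z, (if x \<in> I \<and> z \<in> I then a' else \<zero>\<^bsub>R\<^esub>) \<oplus>\<^bsub>R\<^esub> (if y \<in> I \<and> z \<in> I then b' else \<zero>\<^bsub>R\<^esub>))"
     "(x, a') \<in> vcls R I J a" "(y, b') \<in> vcls R I J b" "z \<in> J" "x \<le> z" "y \<le> z"
    by (simp only: mem_Collect_eq) (elim exE conjE, rule that; assumption)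
  from h(2) have 1: "x \<in> J" "a' \<in> Cr R I x" "a' = a" by (auto simp: vcls_def)
  from h(3) have 2: "y \<in> J" "b' \<in> Cr R I y" "b' = b" by (auto simp: vcls_def)
  have "(if x \<in> I \<and> z \<in> I then a' else \<zero>\<^bsub>R\<^esub>) = a'" by (rule key_A[OF up 1(1) h(4) h(5) 1(2)])
  moreover have "(if y \<in> I \<and> z \<in> I then b' else \<zero>\<^bsub>R\<^esub>) = b'" by (rule key_A[OF up 2(1) h(4) h(6) 2(2)])
  ultimately show "c = a \<oplus>\<^bsub>R\<^esub> b" using h(1) 1(3) 2(3) by simp
qed

lemma upper_A_smult:
  fixes R :: "'a ring" and I J :: "'p::order set"
  assumes R: "ring R" and dir: "directed J" and up: "\<forall>x\<in>J. \<forall>y\<in>J. x \<in> I \<and> x \<le> y \<longrightarrow> y \<in> I"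
    and x0: "x0 \<in> J" "x0 \<in> I" and a: "a \<in> carrier R" and c: "c \<in> carrier R"
  shows "smult (dlim_module (indicator_pmod R I) J) c (vcls R I J a) = vcls R I J (c \<otimes>\<^bsub>R\<^esub> a)"
  unfolding dlim_smult
proof (rule image_A[OF dir up, where wz = x0])
  show "x0 \<in> J" by fact
  show "c \<otimes>\<^bsub>R\<^esub> a \<in> Cr R I x0" using x0 a c R by (simp add: Cr_def ring.ring_simprules)
  show "(x0, c \<otimes>\<^bsub>R\<^esub> a) \<in> {(x, c \<otimes>\<^bsub>R\<^esub> a') | x a'. (x, a') \<in> vcls R I J a}"
    using x0_vcls[OF x0 a] by (simp only: mem_Collect_eq) (rule exI[of _ x0], rule exI[of _ a], simp)
next
  fix y' d
  assume "(y', d) \<in> {(x, c \<otimes>\<^bsub>R\<^esub> a') | x a'. (x, a') \<in> vcls R I J a}"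
  then show "d = c \<otimes>\<^bsub>R\<^esub> a" by (auto simp: vcls_def)
qed

lemma the_vcls':
  assumes "x0 \<in> J" "x0 \<in> I" "a \<in> carrier R"
  shows "(THE b. \<exists>x. (x, b) \<in> vcls R I J a) = a"
  by (rule the_vcls[OF x0_vcls[OF assms]])

lemma upper_B_carrier:
  fixes R :: "'a ring" and I J :: "'p::order set"
  assumes R: "ring R" and dir: "directed J" and B: "\<forall>x\<in>J. x \<in> I \<longrightarrow> (\<exists>z\<in>J. x \<le> z \<and> z \<notin> I)"
  shows "carrier (dlim_module (indicator_pmod R I) J) = {SIGMA x:J. Cr R I x}"
proof -
  have cls: "dlim_rel (indicator_pmod R I) J `` {s} = (SIGMA x:J. Cr R I x)" if "s \<in> (SIGMA x:J. Cr R I x)" for s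
  proof -
    obtain x a where xa: "s = (x, a)" by fastforce
    show ?thesis
    proof (rule Set.set_eqI)
      fix t :: "'p \<times> 'a"
      obtain y b where yb: "t = (y, b)" by fastforce
      show "t \<in> dlim_rel (indicator_pmod R I) J `` {s} \<longleftrightarrow> t \<in> (SIGMA x:J. Cr R I x)"
        using that unfolding xa yb by (simp add: rel_B[OF dir B])
    qed
  qed
  obtain x where x: "x \<in> J" using dir unfolding directed_def by blast
  have ne: "(x, \<zero>\<^bsub>R\<^esub>) \<in> (SIGMA x:J. Cr R I x)" using x zero_Cr[OF R] by simp
  show ?thesis
  proof (rule equalityI)
    show "carrier (dlim_module (indicator_pmod R I) J) \<subseteq> {SIGMA x:J. Cr R I x}"
    proof
      fix X assume "X \<in> carrier (dlim_module (indicator_pmod R I) J)"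
      then obtain s where s: "s \<in> (SIGMA x:J. Cr R I x)" "X = dlim_rel (indicator_pmod R I) J `` {s}"
        unfolding dlim_carrier by (rule quotientE)
      then show "X \<in> {SIGMA x:J. Cr R I x}" using cls by simp
    qed
  next
    have "dlim_rel (indicator_pmod R I) J `` {(x, \<zero>\<^bsub>R\<^esub>)} \<in> carrier (dlim_module (indicator_pmod R I) J)"
      unfolding dlim_carrier using ne by (rule quotientI)
    then show "{SIGMA x:J. Cr R I x} \<subseteq> carrier (dlim_module (indicator_pmod R I) J)"
      using cls[OF ne] by simp
  qed
qed

lemma pmod_iso_pair: "pmod_iso R (M, F) (N, G) \<longleftrightarrow>
   (\<exists>\<eta>. (\<forall>p. linear_map R (M p) (N p) (\<eta> p) \<and> bij_betw (\<eta> p) (carrier (M p)) (carrier (N p))) \<and>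
        (\<forall>p q. p \<le> q \<longrightarrow> (\<forall>x\<in>carrier (M p). \<eta> q (F p q x) = G p q (\<eta> p x))))"
  by (simp add: pmod_iso_def)

lemma ring_module_simps: "carrier (ring_module R) = carrier R" "add (ring_module R) = add R"
  "smult (ring_module R) = mult R"
  by (simp_all add: ring_module_def)

lemma zero_module_simps: "carrier (zero_module R) = {\<zero>\<^bsub>R\<^esub>}" "add (zero_module R) = add R"
  "smult (zero_module R) = mult R"
  by (simp_all add: zero_module_def)

lemma linear_to_zero:
  assumes R: "ring R"
  shows "linear_map R M (zero_module R) (\<lambda>_. \<zero>\<^bsub>R\<^esub>)"
  using R unfolding linear_map_def zero_module_simps by (simp add: ring.ring_simprules)

lemma upper_A_point:
  fixes R :: "'a ring" and I J :: "'p::order set"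
  assumes R: "ring R" and dir: "directed J" and up: "\<forall>x\<in>J. \<forall>y\<in>J. x \<in> I \<and> x \<le> y \<longrightarrow> y \<in> I"
    and x0: "x0 \<in> J" "x0 \<in> I"
  shows "linear_map R (dlim_module (indicator_pmod R I) J) (ring_module R) (\<lambda>X. THE a. \<exists>x. (x, a) \<in> X)
     \<and> bij_betw (\<lambda>X. THE a. \<exists>x. (x, a) \<in> X) (carrier (dlim_module (indicator_pmod R I) J)) (carrier (ring_module R))"
proof -
  let ?h = "\<lambda>X. THE a. \<exists>x. (x, a) \<in> X"
  note car = upper_A_carrier[OF R dir up x0]
  have ev: "?h (vcls R I J a) = a" if "a \<in> carrier R" for a
    by (rule the_vcls'[OF x0 that])
  have lin: "linear_map R (dlim_module (indicator_pmod R I) J) (ring_module R) ?h"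
    unfolding linear_map_def ring_module_simps car
  proof (intro conjI ballI)
    fix X assume "X \<in> vcls R I J ` carrier R"
    then obtain a where a: "a \<in> carrier R" "X = vcls R I J a" by blast
    show "?h X \<in> carrier R" using a ev by simp
  next
    fix X Y assume "X \<in> vcls R I J ` carrier R" "Y \<in> vcls R I J ` carrier R"
    then obtain a b where a: "a \<in> carrier R" "X = vcls R I J a" and b: "b \<in> carrier R" "Y = vcls R I J b"
      by blast
    have ab: "a \<oplus>\<^bsub>R\<^esub> b \<in> carrier R" using a b R by (simp add: ring.ring_simprules)
    show "?h (X \<oplus>\<^bsub>dlim_module (indicator_pmod R I) J\<^esub> Y) = ?h X \<oplus>\<^bsub>R\<^esub> ?h Y"
      using upper_A_add[OF R dir up x0 a(1) b(1)] ev[OF ab] ev[OF a(1)] ev[OF b(1)] a b by simp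
  next
    fix c X assume c: "c \<in> carrier R" and "X \<in> vcls R I J ` carrier R"
    then obtain a where a: "a \<in> carrier R" "X = vcls R I J a" by blast
    have ca: "c \<otimes>\<^bsub>R\<^esub> a \<in> carrier R" using a c R by (simp add: ring.ring_simprules)
    show "?h (c \<odot>\<^bsub>dlim_module (indicator_pmod R I) J\<^esub> X) = c \<otimes>\<^bsub>R\<^esub> ?h X"
      using upper_A_smult[OF R dir up x0 a(1) c] ev[OF ca] ev[OF a(1)] a by simp
  qed
  have bij: "bij_betw ?h (vcls R I J ` carrier R) (carrier R)"
  proof (rule bij_betw_imageI)
    show "inj_on ?h (vcls R I J ` carrier R)"
    proof (rule inj_onI)
      fix X Y assume "X \<in> vcls R I J ` carrier R" "Y \<in> vcls R I J ` carrier R" "?h X = ?h Y"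
      then show "X = Y" using ev by auto
    qed
    show "?h ` vcls R I J ` carrier R = carrier R"
      using ev by (simp add: image_image)
  qed
  show ?thesis using lin bij car by (simp add: ring_module_simps)
qed

lemma upper_B_point:
  fixes R :: "'a ring" and I J :: "'p::order set"
  assumes R: "ring R" and dir: "directed J" and B: "\<forall>x\<in>J. x \<in> I \<longrightarrow> (\<exists>z\<in>J. x \<le> z \<and> z \<notin> I)"
  shows "linear_map R (dlim_module (indicator_pmod R I) J) (zero_module R) (\<lambda>X. \<zero>\<^bsub>R\<^esub>)
     \<and> bij_betw (\<lambda>X. \<zero>\<^bsub>R\<^esub>) (carrier (dlim_module (indicator_pmod R I) J)) (carrier (zero_module R))"
  using linear_to_zero[OF R] upper_B_carrier[OF R dir B] by (simp add: zero_module_simps bij_betw_def)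

lemma upper_generic:
  fixes R :: "'a ring" and I S :: "'p::order set"
  assumes R: "ring R"
    and dir: "\<And>p::'p. directed {x. way_below x p}"
    and mono: "\<And>p q x::'p. p \<le> q \<Longrightarrow> way_below x p \<Longrightarrow> way_below x q"
    and cA: "\<And>p. p \<in> S \<Longrightarrow> (\<forall>x\<in>{x. way_below x p}. \<forall>y\<in>{x. way_below x p}. x \<in> I \<and> x \<le> y \<longrightarrow> y \<in> I)
                 \<and> (\<exists>x0. x0 \<in> {x. way_below x p} \<and> x0 \<in> I)"
    and cB: "\<And>p. p \<notin> S \<Longrightarrow> (\<forall>x\<in>{x. way_below x p}. x \<in> I \<longrightarrow> (\<exists>z\<in>{x. way_below x p}. x \<le> z \<and> z \<notin> I))"
  shows "pmod_iso R (upper_pmod (indicator_pmod R I)) (indicator_pmod R S)"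
proof -
  define W where "W p = {x. way_below x p}" for p :: 'p
  define \<eta> where "\<eta> p X = (if p \<in> S then (THE a. \<exists>x. (x, a) \<in> X) else \<zero>\<^bsub>R\<^esub>)" for p :: 'p and X :: "('p \<times> 'a) set"
  have dirW: "directed (W p)" for p unfolding W_def by (rule dir)
  have monoW: "W p \<subseteq> W q" if "p \<le> q" for p q unfolding W_def using mono[OF that] by blast
  have up: "\<forall>x\<in>W p. \<forall>y\<in>W p. x \<in> I \<and> x \<le> y \<longrightarrow> y \<in> I" if "p \<in> S" for p
    using cA[OF that] unfolding W_def by blast
  have ex0: "\<exists>x0. x0 \<in> W p \<and> x0 \<in> I" if "p \<in> S" for p
    using cA[OF that] unfolding W_def by blast
  have B: "\<forall>x\<in>W p. x \<in> I \<longrightarrow> (\<exists>z\<in>W p. x \<le> z \<and> z \<notin> I)" if "p \<notin> S" for p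
    using cB[OF that] unfolding W_def by blast
  have point: "linear_map R (dlim_module (indicator_pmod R I) (W p)) (if p \<in> S then ring_module R else zero_module R) (\<eta> p)
     \<and> bij_betw (\<eta> p) (carrier (dlim_module (indicator_pmod R I) (W p))) (carrier (if p \<in> S then ring_module R else zero_module R))" for p
  proof (cases "p \<in> S")
    case True
    then obtain x0 where "x0 \<in> W p" "x0 \<in> I" using ex0 by blast
    moreover have "\<eta> p = (\<lambda>X. THE a. \<exists>x. (x, a) \<in> X)" using True by (simp add: \<eta>_def fun_eq_iff)
    ultimately show ?thesis using upper_A_point[OF R dirW up[OF True]] True by simp
  next
    case False
    have "\<eta> p = (\<lambda>X. \<zero>\<^bsub>R\<^esub>)" using False by (simp add: \<eta>_def fun_eq_iff)
    then show ?thesis using upper_B_point[OF R dirW B[OF False]] False by simp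
  qed
  have nat: "\<eta> q (dlim_rel (indicator_pmod R I) (W q) `` X) = (if p \<in> S \<and> q \<in> S then \<eta> p X else \<zero>\<^bsub>R\<^esub>)"
    if pq: "p \<le> q" and X: "X \<in> carrier (dlim_module (indicator_pmod R I) (W p))" for p q X
  proof (cases "q \<in> S")
    case False
    then show ?thesis by (simp add: \<eta>_def)
  next
    case qS: True
    obtain xq where xq: "xq \<in> W q" "xq \<in> I" using ex0[OF qS] by blast
    show ?thesis
    proof (cases "p \<in> S")
      case pS: True
      obtain xp where xp: "xp \<in> W p" "xp \<in> I" using ex0[OF pS] by blast
      from X obtain a where a: "a \<in> carrier R" "X = vcls R I (W p) a"
        unfolding upper_A_carrier[OF R dirW up[OF pS] xp] by blast
      have "dlim_rel (indicator_pmod R I) (W q) `` X = vcls R I (W q) a"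
        unfolding a(2)
      proof (rule image_A[OF dirW up[OF qS], where wz = xp])
        show "(xp, a) \<in> vcls R I (W p) a" by (rule x0_vcls[OF xp a(1)])
        show "xp \<in> W q" using xp monoW[OF pq] by blast
        show "a \<in> Cr R I xp" using xp a by (simp add: Cr_def)
        show "\<And>y b. (y, b) \<in> vcls R I (W p) a \<Longrightarrow> b = a" by (simp add: vcls_def)
      qed
      then show ?thesis
        using qS pS a the_vcls'[OF xq a(1)] the_vcls'[OF xp a(1)] by (simp add: \<eta>_def)
    next
      case pN: False
      have Xeq: "X = (SIGMA x:W p. Cr R I x)" using X unfolding upper_B_carrier[OF R dirW B[OF pN]] by simp
      have nI: "y \<notin> I" if yW: "y \<in> W p" for y
      proof
        assume yI: "y \<in> I"
        then obtain z where z: "z \<in> W p" "y \<le> z" "z \<notin> I" using B[OF pN] yW by blast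
        have "y \<in> W q" "z \<in> W q" using yW z monoW[OF pq] by blast+
        then have "z \<in> I" using up[OF qS] yI z(2) by blast
        then show False using z(3) by simp
      qed
      obtain y where y: "y \<in> W p" using dirW[of p] unfolding directed_def by blast
      have z0: "\<zero>\<^bsub>R\<^esub> \<in> carrier R" using R by (simp add: ring.ring_simprules)
      have "dlim_rel (indicator_pmod R I) (W q) `` X = vcls R I (W q) \<zero>\<^bsub>R\<^esub>"
        unfolding Xeq
      proof (rule image_A[OF dirW up[OF qS], where wz = y])
        show "(y, \<zero>\<^bsub>R\<^esub>) \<in> (SIGMA x:W p. Cr R I x)" using y zero_Cr[OF R] by simp
        show "y \<in> W q" using y monoW[OF pq] by blast
        show "\<zero>\<^bsub>R\<^esub> \<in> Cr R I y" by (rule zero_Cr[OF R])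
        show "\<And>y' b. (y', b) \<in> (SIGMA x:W p. Cr R I x) \<Longrightarrow> b = \<zero>\<^bsub>R\<^esub>"
          using nI by (auto simp: Cr_def)
      qed
      then show ?thesis
        using qS pN the_vcls'[OF xq z0] by (simp add: \<eta>_def)
    qed
  qed
  have up_eq: "upper_pmod (indicator_pmod R I) = ((\<lambda>p. dlim_module (indicator_pmod R I) (W p)),
      (\<lambda>p q X. dlim_rel (indicator_pmod R I) (W q) `` X))"
    by (simp add: upper_pmod_def W_def)
  have ind_eq: "indicator_pmod R S = ((\<lambda>p. if p \<in> S then ring_module R else zero_module R),
      (\<lambda>p q x. if p \<in> S \<and> q \<in> S then x else \<zero>\<^bsub>R\<^esub>))"
    by (simp add: indicator_pmod_def)
  show ?thesis
    unfolding up_eq ind_eq pmod_iso_pair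
    apply (rule exI[of _ \<eta>])
    using point nat by simp
qed

lemma ilim_carrier: fixes R :: "'a ring" and I J :: "'p::order set"
  shows "carrier (ilim_module (indicator_pmod R I) J) =
   {g \<in> Pi\<^sub>E J (Cr R I). \<forall>x\<in>J. \<forall>y\<in>J. x \<le> y \<longrightarrow> (if x \<in> I \<and> y \<in> I then g x else \<zero>\<^bsub>R\<^esub>) = g y}"
proof -
  have "carrier (ilim_module MF J) = {g \<in> Pi\<^sub>E J (\<lambda>x. carrier (fst MF x)).
                  \<forall>x\<in>J. \<forall>y\<in>J. x \<le> y \<longrightarrow> snd MF x y (g x) = g y}" for MF :: "('p, 'a, 'a) pmod"
    by (cases MF) (simp add: ilim_module_def)
  then show ?thesis by (simp only: ind_carrier ind_snd)
qed

lemma ilim_add: fixes R :: "'a ring" and I J :: "'p::order set"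
  shows "add (ilim_module (indicator_pmod R I) J) g h = (\<lambda>x\<in>J. g x \<oplus>\<^bsub>R\<^esub> h x)"
proof -
  have "add (ilim_module MF J) g h = (\<lambda>x\<in>J. g x \<oplus>\<^bsub>fst MF x\<^esub> h x)" for MF :: "('p, 'a, 'a) pmod"
    by (cases MF) (simp add: ilim_module_def)
  then show ?thesis by (simp only: ind_add)
qed

lemma ilim_smult: fixes R :: "'a ring" and I J :: "'p::order set"
  shows "smult (ilim_module (indicator_pmod R I) J) c g = (\<lambda>x\<in>J. c \<otimes>\<^bsub>R\<^esub> g x)"
proof -
  have "smult (ilim_module MF J) c g = (\<lambda>x\<in>J. c \<odot>\<^bsub>fst MF x\<^esub> g x)" for MF :: "('p, 'a, 'a) pmod"
    by (cases MF) (simp add: ilim_module_def)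
  then show ?thesis by (simp only: ind_smult)
qed

definition fam :: "'a ring \<Rightarrow> 'p set \<Rightarrow> 'p set \<Rightarrow> 'a \<Rightarrow> 'p \<Rightarrow> 'a" where
  "fam R I J c = (\<lambda>x\<in>J. if x \<in> I then c else \<zero>\<^bsub>R\<^esub>)"

lemma lower_A_carrier:
  fixes R :: "'a ring" and I J :: "'p::order set"
  assumes R: "ring R" and dirl: "\<forall>x\<in>J. \<forall>y\<in>J. \<exists>z\<in>J. z \<le> x \<and> z \<le> y"
    and dn: "\<forall>x\<in>J. \<forall>y\<in>J. y \<in> I \<and> x \<le> y \<longrightarrow> x \<in> I"
    and x0: "x0 \<in> J" "x0 \<in> I"
  shows "carrier (ilim_module (indicator_pmod R I) J) = fam R I J ` carrier R"
proof (rule equalityI)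
  show "carrier (ilim_module (indicator_pmod R I) J) \<subseteq> fam R I J ` carrier R"
  proof
    fix g assume "g \<in> carrier (ilim_module (indicator_pmod R I) J)"
    then have gP: "g \<in> Pi\<^sub>E J (Cr R I)" and gc: "\<And>x y. x \<in> J \<Longrightarrow> y \<in> J \<Longrightarrow> x \<le> y \<Longrightarrow>
        (if x \<in> I \<and> y \<in> I then g x else \<zero>\<^bsub>R\<^esub>) = g y"
      unfolding ilim_carrier by auto
    have const: "g y = g x0" if y: "y \<in> J" "y \<in> I" for y
    proof -
      obtain z where z: "z \<in> J" "z \<le> x0" "z \<le> y" using dirl x0(1) y(1) by blast
      have zI: "z \<in> I" using dn z x0 by blast
      have "g y = g z" using gc[OF z(1) y(1) z(3)] zI y(2) by simp
      moreover have "g x0 = g z" using gc[OF z(1) x0(1) z(2)] zI x0(2) by simp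
      ultimately show ?thesis by simp
    qed
    have "g = fam R I J (g x0)"
    proof (rule ext)
      fix y show "g y = fam R I J (g x0) y"
      proof (cases "y \<in> J")
        case True
        show ?thesis
        proof (cases "y \<in> I")
          case True
          then show ?thesis using const \<open>y \<in> J\<close> by (simp add: fam_def)
        next
          case False
          then have "g y \<in> Cr R I y" using gP \<open>y \<in> J\<close> by (simp add: PiE_iff)
          then show ?thesis using False \<open>y \<in> J\<close> by (simp add: fam_def Cr_def)
        qed
      next
        case False
        then show ?thesis using gP by (simp add: fam_def PiE_iff extensional_def)
      qed
    qed
    moreover have "g x0 \<in> carrier R" using PiE_mem[OF gP x0(1)] x0(2) by (simp add: Cr_def)
    ultimately show "g \<in> fam R I J ` carrier R" by (rule image_eqI)
  qed
next
  show "fam R I J ` carrier R \<subseteq> carrier (ilim_module (indicator_pmod R I) J)"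
  proof
    fix g assume "g \<in> fam R I J ` carrier R"
    then obtain c where c: "c \<in> carrier R" "g = fam R I J c" by blast
    have "g \<in> Pi\<^sub>E J (Cr R I)" using c by (simp add: fam_def Cr_def PiE_iff)
    moreover have "(if x \<in> I \<and> y \<in> I then g x else \<zero>\<^bsub>R\<^esub>) = g y" if "x \<in> J" "y \<in> J" "x \<le> y" for x y
    proof (cases "y \<in> I")
      case True
      then have "x \<in> I" using dn that by blast
      then show ?thesis using True that c by (simp add: fam_def)
    next
      case False
      then show ?thesis using that c by (simp add: fam_def)
    qed
    ultimately show "g \<in> carrier (ilim_module (indicator_pmod R I) J)"
      unfolding ilim_carrier by blast
  qed
qed

lemma lower_B_carrier:
  fixes R :: "'a ring" and I J :: "'p::order set"
  assumes R: "ring R" and B: "\<forall>y\<in>J. \<exists>z\<in>J. z \<le> y \<and> z \<notin> I"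
  shows "carrier (ilim_module (indicator_pmod R I) J) = {(\<lambda>x\<in>J. \<zero>\<^bsub>R\<^esub>)}"
proof (rule equalityI)
  show "carrier (ilim_module (indicator_pmod R I) J) \<subseteq> {(\<lambda>x\<in>J. \<zero>\<^bsub>R\<^esub>)}"
  proof
    fix g assume "g \<in> carrier (ilim_module (indicator_pmod R I) J)"
    then have gP: "g \<in> Pi\<^sub>E J (Cr R I)" and gc: "\<And>x y. x \<in> J \<Longrightarrow> y \<in> J \<Longrightarrow> x \<le> y \<Longrightarrow>
        (if x \<in> I \<and> y \<in> I then g x else \<zero>\<^bsub>R\<^esub>) = g y"
      unfolding ilim_carrier by auto
    have "g = (\<lambda>x\<in>J. \<zero>\<^bsub>R\<^esub>)"
    proof (rule ext)
      fix y show "g y = (\<lambda>x\<in>J. \<zero>\<^bsub>R\<^esub>) y"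
      proof (cases "y \<in> J")
        case True
        then obtain z where z: "z \<in> J" "z \<le> y" "z \<notin> I" using B by blast
        show ?thesis using gc[OF z(1) True z(2)] z(3) True by simp
      next
        case False
        then show ?thesis using gP by (simp add: PiE_iff extensional_def)
      qed
    qed
    then show "g \<in> {(\<lambda>x\<in>J. \<zero>\<^bsub>R\<^esub>)}" by simp
  qed
next
  have "(\<lambda>x\<in>J. \<zero>\<^bsub>R\<^esub>) \<in> Pi\<^sub>E J (Cr R I)" by (simp add: PiE_iff zero_Cr[OF R])
  then show "{(\<lambda>x\<in>J. \<zero>\<^bsub>R\<^esub>)} \<subseteq> carrier (ilim_module (indicator_pmod R I) J)"
    unfolding ilim_carrier by simp
qed

lemma lower_generic:
  fixes R :: "'a ring" and I S :: "'p::order set"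
  assumes R: "ring R"
    and dirl: "\<And>p::'p. \<forall>x\<in>{x. way_below p x}. \<forall>y\<in>{x. way_below p x}. \<exists>z\<in>{x. way_below p x}. z \<le> x \<and> z \<le> y"
    and monol: "\<And>p q x::'p. p \<le> q \<Longrightarrow> way_below q x \<Longrightarrow> way_below p x"
    and cA: "\<And>p. p \<in> S \<Longrightarrow> (\<forall>x\<in>{x. way_below p x}. \<forall>y\<in>{x. way_below p x}. y \<in> I \<and> x \<le> y \<longrightarrow> x \<in> I)
                 \<and> (\<exists>x0. x0 \<in> {x. way_below p x} \<and> x0 \<in> I)"
    and cB: "\<And>p. p \<notin> S \<Longrightarrow> (\<forall>y\<in>{x. way_below p x}. \<exists>z\<in>{x. way_below p x}. z \<le> y \<and> z \<notin> I)"
  shows "pmod_iso R (lower_pmod (indicator_pmod R I)) (indicator_pmod R S)"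
proof -
  define V where "V p = {x. way_below p x}" for p :: 'p
  define xs where "xs p = (SOME x. x \<in> V p \<and> x \<in> I)" for p
  define \<eta> where "\<eta> p g = (if p \<in> S then g (xs p) else \<zero>\<^bsub>R\<^esub>)" for p :: 'p and g :: "'p \<Rightarrow> 'a"
  have dirV: "\<forall>x\<in>V p. \<forall>y\<in>V p. \<exists>z\<in>V p. z \<le> x \<and> z \<le> y" for p unfolding V_def by (rule dirl)
  have monoV: "V q \<subseteq> V p" if "p \<le> q" for p q unfolding V_def using monol[OF that] by blast
  have dn: "\<forall>x\<in>V p. \<forall>y\<in>V p. y \<in> I \<and> x \<le> y \<longrightarrow> x \<in> I" if "p \<in> S" for p
    using cA[OF that] unfolding V_def by blast
  have xs: "xs p \<in> V p" "xs p \<in> I" if "p \<in> S" for p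
  proof -
    have "\<exists>x. x \<in> V p \<and> x \<in> I" using cA[OF that] unfolding V_def by blast
    then have "xs p \<in> V p \<and> xs p \<in> I" unfolding xs_def by (rule someI_ex)
    then show "xs p \<in> V p" "xs p \<in> I" by auto
  qed
  have B: "\<forall>y\<in>V p. \<exists>z\<in>V p. z \<le> y \<and> z \<notin> I" if "p \<notin> S" for p
    using cB[OF that] unfolding V_def by blast
  have point: "linear_map R (ilim_module (indicator_pmod R I) (V p)) (if p \<in> S then ring_module R else zero_module R) (\<eta> p)
     \<and> bij_betw (\<eta> p) (carrier (ilim_module (indicator_pmod R I) (V p))) (carrier (if p \<in> S then ring_module R else zero_module R))" for p
  proof (cases "p \<in> S")
    case True
    note car = lower_A_carrier[OF R dirV dn[OF True] xs[OF True]]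
    have ev: "\<eta> p (fam R I (V p) c) = c" for c
      using True xs[OF True] by (simp add: \<eta>_def fam_def)
    have lin: "linear_map R (ilim_module (indicator_pmod R I) (V p)) (ring_module R) (\<eta> p)"
      unfolding linear_map_def ring_module_simps car
    proof (intro conjI ballI)
      fix g assume "g \<in> fam R I (V p) ` carrier R"
      then obtain a where a: "a \<in> carrier R" "g = fam R I (V p) a" by blast
      show "\<eta> p g \<in> carrier R" using a ev by simp
    next
      fix g h assume "g \<in> fam R I (V p) ` carrier R" "h \<in> fam R I (V p) ` carrier R"
      show "\<eta> p (g \<oplus>\<^bsub>ilim_module (indicator_pmod R I) (V p)\<^esub> h) = \<eta> p g \<oplus>\<^bsub>R\<^esub> \<eta> p h"
        unfolding ilim_add using True xs[OF True] by (simp add: \<eta>_def)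
    next
      fix c g assume "c \<in> carrier R" "g \<in> fam R I (V p) ` carrier R"
      show "\<eta> p (c \<odot>\<^bsub>ilim_module (indicator_pmod R I) (V p)\<^esub> g) = c \<otimes>\<^bsub>R\<^esub> \<eta> p g"
        unfolding ilim_smult using True xs[OF True] by (simp add: \<eta>_def)
    qed
    have bij: "bij_betw (\<eta> p) (fam R I (V p) ` carrier R) (carrier R)"
    proof (rule bij_betw_imageI)
      show "inj_on (\<eta> p) (fam R I (V p) ` carrier R)"
      proof (rule inj_onI)
        fix X Y assume "X \<in> fam R I (V p) ` carrier R" "Y \<in> fam R I (V p) ` carrier R" "\<eta> p X = \<eta> p Y"
        then show "X = Y" using ev by auto
      qed
      show "\<eta> p ` fam R I (V p) ` carrier R = carrier R"
        using ev by (simp add: image_image)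
    qed
    show ?thesis using lin bij car True by (simp add: ring_module_simps)
  next
    case False
    have "\<eta> p = (\<lambda>X. \<zero>\<^bsub>R\<^esub>)" using False by (simp add: \<eta>_def fun_eq_iff)
    then show ?thesis using linear_to_zero[OF R] lower_B_carrier[OF R B[OF False]] False
      by (simp add: zero_module_simps bij_betw_def)
  qed
  have nat: "\<eta> q (restrict g (V q)) = (if p \<in> S \<and> q \<in> S then \<eta> p g else \<zero>\<^bsub>R\<^esub>)"
    if pq: "p \<le> q" and g: "g \<in> carrier (ilim_module (indicator_pmod R I) (V p))" for p q g
  proof (cases "q \<in> S")
    case False
    then show ?thesis by (simp add: \<eta>_def)
  next
    case qS: True
    have xqp: "xs q \<in> V p" using xs[OF qS] monoV[OF pq] by blast
    have lhs: "\<eta> q (restrict g (V q)) = g (xs q)" using qS xs[OF qS] by (simp add: \<eta>_def)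
    show ?thesis
    proof (cases "p \<in> S")
      case pS: True
      from g obtain c where c: "c \<in> carrier R" "g = fam R I (V p) c"
        unfolding lower_A_carrier[OF R dirV dn[OF pS] xs[OF pS]] by blast
      show ?thesis using lhs pS qS c xqp xs[OF qS] xs[OF pS] by (simp add: \<eta>_def fam_def)
    next
      case pN: False
      have "g = (\<lambda>x\<in>V p. \<zero>\<^bsub>R\<^esub>)" using g unfolding lower_B_carrier[OF R B[OF pN]] by simp
      then show ?thesis using lhs pN xqp by simp
    qed
  qed
  have lo_eq: "lower_pmod (indicator_pmod R I) = ((\<lambda>p. ilim_module (indicator_pmod R I) (V p)),
      (\<lambda>p q g. restrict g (V q)))"
    by (simp add: lower_pmod_def V_def)
  have ind_eq: "indicator_pmod R S = ((\<lambda>p. if p \<in> S then ring_module R else zero_module R),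
      (\<lambda>p q x. if p \<in> S \<and> q \<in> S then x else \<zero>\<^bsub>R\<^esub>))"
    by (simp add: indicator_pmod_def)
  show ?thesis
    unfolding lo_eq ind_eq pmod_iso_pair
    apply (rule exI[of _ \<eta>])
    using point nat by simp
qed

section \<open>Order theory\<close>

lemma wb_le: "way_below x (y::'p::order) \<Longrightarrow> x \<le> y"
  unfolding way_below_def
  by (drule spec[of _ "{y}"], drule spec[of _ y]) (auto simp: directed_def is_sup_def)

lemma wb_mono_right: "way_below x (p::'p::order) \<Longrightarrow> p \<le> q \<Longrightarrow> way_below x q"
  unfolding way_below_def by (meson order_trans)

lemma wb_mono_left: "x' \<le> x \<Longrightarrow> way_below x (p::'p::order) \<Longrightarrow> way_below x' p"
  unfolding way_below_def by (meson order_trans)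

lemma cont_dir: "continuous_poset TYPE('p::order) \<Longrightarrow> directed {x. way_below x (p::'p)}"
  unfolding continuous_poset_def by blast

lemma cont_sup: "continuous_poset TYPE('p::order) \<Longrightarrow> is_sup {x. way_below x (p::'p)} p"
  unfolding continuous_poset_def by blast

lemma interpolate:
  fixes x z :: "'p::order"
  assumes c: "continuous_poset TYPE('p)" and xz: "way_below x z"
  shows "\<exists>w. way_below x w \<and> way_below w z"
proof -
  define D where "D = {y. \<exists>w. way_below y w \<and> way_below w z}"
  have dirD: "directed D"
    unfolding directed_def
  proof (intro conjI ballI)
    obtain w where w: "way_below w z" using cont_dir[OF c, of z] unfolding directed_def by blast
    obtain y where "way_below y w" using cont_dir[OF c, of w] unfolding directed_def by blast
    then show "D \<noteq> {}" using w unfolding D_def by blast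
  next
    fix y1 y2 assume "y1 \<in> D" "y2 \<in> D"
    then obtain w1 w2 where h: "way_below y1 w1" "way_below w1 z" "way_below y2 w2" "way_below w2 z"
      unfolding D_def by blast
    obtain w3 where w3: "way_below w3 z" "w1 \<le> w3" "w2 \<le> w3"
      using cont_dir[OF c, of z] h unfolding directed_def by blast
    have "way_below y1 w3" "way_below y2 w3" using h w3 wb_mono_right by blast+
    then obtain y3 where "way_below y3 w3" "y1 \<le> y3" "y2 \<le> y3"
      using cont_dir[OF c, of w3] unfolding directed_def by blast
    then show "\<exists>y3\<in>D. y1 \<le> y3 \<and> y2 \<le> y3" using w3 unfolding D_def by blast
  qed
  have supD: "is_sup D z"
    unfolding is_sup_def
  proof (intro conjI allI impI ballI)
    fix d assume "d \<in> D"
    then obtain w where "way_below d w" "way_below w z" unfolding D_def by blast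
    then show "d \<le> z" using wb_le order_trans by blast
  next
    fix u assume u: "\<forall>d\<in>D. d \<le> u"
    have "w \<le> u" if w: "way_below w z" for w
    proof -
      have "\<forall>y\<in>{y. way_below y w}. y \<le> u" using u w unfolding D_def by blast
      then show "w \<le> u" using cont_sup[OF c, of w] unfolding is_sup_def by blast
    qed
    then show "z \<le> u" using cont_sup[OF c, of z] unfolding is_sup_def by blast
  qed
  obtain d where d: "d \<in> D" "x \<le> d" using xz dirD supD unfolding way_below_def by blast
  then obtain w where "way_below d w" "way_below w z" unfolding D_def by blast
  then show ?thesis using d wb_mono_left by blast
qed

lemma istop_scott: "istopology (scott_open :: 'p::order set \<Rightarrow> bool)"
  unfolding istopology_def
proof (intro conjI allI impI)
  fix S T :: "'p set" assume S: "scott_open S" and T: "scott_open T"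
  show "scott_open (S \<inter> T)"
    unfolding scott_open_def
  proof (intro conjI allI impI)
    show "up_set (S \<inter> T)" using S T unfolding scott_open_def up_set_def by blast
  next
    fix D s assume h: "directed D \<and> is_sup D s \<and> s \<in> S \<inter> T"
    then obtain d1 d2 where "d1 \<in> D \<inter> S" "d2 \<in> D \<inter> T" using S T unfolding scott_open_def by blast
    then obtain d3 where "d3 \<in> D" "d1 \<le> d3" "d2 \<le> d3" using h unfolding directed_def by blast
    then have "d3 \<in> D \<inter> (S \<inter> T)" using S T \<open>d1 \<in> D \<inter> S\<close> \<open>d2 \<in> D \<inter> T\<close>
      unfolding scott_open_def up_set_def by blast
    then show "D \<inter> (S \<inter> T) \<noteq> {}" by blast
  qed
next
  fix K :: "'p set set" assume K: "\<forall>K\<in>K. scott_open K"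
  show "scott_open (\<Union>K)"
    unfolding scott_open_def
  proof (intro conjI allI impI)
    show "up_set (\<Union>K)" using K unfolding scott_open_def up_set_def by blast
  next
    fix D s assume h: "directed D \<and> is_sup D s \<and> s \<in> \<Union>K"
    then obtain k where "k \<in> K" "s \<in> k" by blast
    then have "D \<inter> k \<noteq> {}" using K h unfolding scott_open_def by blast
    then show "D \<inter> \<Union>K \<noteq> {}" using \<open>k \<in> K\<close> by blast
  qed
qed

lemma openin_scott: "openin scott_topology = scott_open"
  unfolding scott_topology_def by (rule topology_inverse'[OF istop_scott])

lemma scott_open_UNIV: "scott_open (UNIV :: 'p::order set)"
  unfolding scott_open_def up_set_def directed_def by blast

lemma topspace_scott: "topspace (scott_topology :: 'p::order topology) = UNIV"
  using openin_subset[of scott_topology "UNIV :: 'p set"] scott_open_UNIV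
  unfolding openin_scott by blast

lemma wb_up_open:
  fixes x :: "'p::order"
  assumes c: "continuous_poset TYPE('p)"
  shows "scott_open {y. way_below x y}"
  unfolding scott_open_def
proof (intro conjI allI impI)
  show "up_set {y. way_below x y}" unfolding up_set_def using wb_mono_right by blast
next
  fix D s assume h: "directed D \<and> is_sup D s \<and> s \<in> {y. way_below x y}"
  then obtain y where y: "way_below x y" "way_below y s" using interpolate[OF c] by blast
  then obtain d where "d \<in> D" "y \<le> d" using h unfolding way_below_def by blast
  then have "way_below x d" using y wb_mono_right by blast
  then show "D \<inter> {y. way_below x y} \<noteq> {}" using \<open>d \<in> D\<close> by blast
qed

lemma scott_interior:
  fixes U :: "'p::order set"
  assumes c: "continuous_poset TYPE('p)" and U: "up_set U"
  shows "p \<in> scott_topology interior_of U \<longleftrightarrow> (\<exists>x. way_below x p \<and> x \<in> U)"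
proof
  assume "p \<in> scott_topology interior_of U"
  then obtain T where T: "scott_open T" "p \<in> T" "T \<subseteq> U" unfolding interior_of_def openin_scott by blast
  then have "{x. way_below x p} \<inter> T \<noteq> {}"
    using cont_dir[OF c, of p] cont_sup[OF c, of p] unfolding scott_open_def by blast
  then show "\<exists>x. way_below x p \<and> x \<in> U" using T by blast
next
  assume "\<exists>x. way_below x p \<and> x \<in> U"
  then obtain x where x: "way_below x p" "x \<in> U" by blast
  have "{y. way_below x y} \<subseteq> U" using x U wb_le unfolding up_set_def by blast
  then show "p \<in> scott_topology interior_of U"
    unfolding interior_of_def openin_scott using wb_up_open[OF c, of x] x by blast
qed

lemma scott_closure:
  fixes D :: "'p::order set"
  assumes c: "continuous_poset TYPE('p)" and Dd: "down_set D"
  shows "p \<in> scott_topology closure_of D \<longleftrightarrow> (\<forall>x. way_below x p \<longrightarrow> x \<in> D)"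
proof
  assume h: "p \<in> scott_topology closure_of D"
  show "\<forall>x. way_below x p \<longrightarrow> x \<in> D"
  proof (intro allI impI)
    fix x assume x: "way_below x p"
    have "\<exists>y\<in>D. y \<in> {y. way_below x y}"
      using h wb_up_open[OF c, of x] x unfolding closure_of_def openin_scott by blast
    then obtain d where "d \<in> D" "way_below x d" by blast
    then show "x \<in> D" using Dd wb_le unfolding down_set_def by blast
  qed
next
  assume h: "\<forall>x. way_below x p \<longrightarrow> x \<in> D"
  show "p \<in> scott_topology closure_of D"
    unfolding closure_of_def topspace_scott openin_scott
  proof (intro CollectI conjI UNIV_I allI impI)
    fix T assume T: "p \<in> T \<and> scott_open T"
    then have "{x. way_below x p} \<inter> T \<noteq> {}"
      using cont_dir[OF c, of p] cont_sup[OF c, of p] unfolding scott_open_def by blast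
    then show "\<exists>y\<in>D. y \<in> T" using h by blast
  qed
qed



section \<open>R^n\<close>

lemma wb_vec_imp:
  fixes x y :: "real ^ 'n"
  assumes "way_below x y"
  shows "x $ i < y $ i"
proof -
  define D where "D = {(\<chi> j. y $ j - c) | c. c > (0::real)}"
  have dirD: "directed D"
    unfolding directed_def
  proof (intro conjI ballI)
    show "D \<noteq> {}" unfolding D_def by (auto intro!: exI[of _ 1])
  next
    fix d1 d2 assume "d1 \<in> D" "d2 \<in> D"
    then obtain c1 c2 where c: "c1 > 0" "c2 > 0" "d1 = (\<chi> j. y $ j - c1)" "d2 = (\<chi> j. y $ j - c2)"
      unfolding D_def by blast
    have "(\<chi> j. y $ j - min c1 c2) \<in> D" unfolding D_def using c by auto
    moreover have "d1 \<le> (\<chi> j. y $ j - min c1 c2)" "d2 \<le> (\<chi> j. y $ j - min c1 c2)"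
      using c by (auto simp: less_eq_vec_def)
    ultimately show "\<exists>z\<in>D. d1 \<le> z \<and> d2 \<le> z" by blast
  qed
  have supD: "is_sup D y"
    unfolding is_sup_def
  proof (intro conjI allI impI ballI)
    fix d assume "d \<in> D" then show "d \<le> y" unfolding D_def by (auto simp: less_eq_vec_def)
  next
    fix u assume u: "\<forall>d\<in>D. d \<le> u"
    show "y \<le> u" unfolding less_eq_vec_def
    proof
      fix j
      show "y $ j \<le> u $ j"
      proof (rule ccontr)
        assume nle: "\<not> y $ j \<le> u $ j"
        define c where "c = (y $ j - u $ j) / 2"
        have c2: "2 * c = y $ j - u $ j" by (simp add: c_def)
        have pos: "c > 0" using nle c2 by linarith
        then have "(\<chi> k. y $ k - c) \<in> D" unfolding D_def by blast
        then have "(\<chi> k. y $ k - c) \<le> u" using u by blast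
        then have "(\<chi> k. y $ k - c) $ j \<le> u $ j" unfolding less_eq_vec_def by blast
        then have "y $ j - c \<le> u $ j" by simp
        then show False using pos c2 by linarith
      qed
    qed
  qed
  obtain d where "d \<in> D" "x \<le> d" using assms dirD supD unfolding way_below_def by blast
  then obtain c where "c > 0" "x \<le> (\<chi> j. y $ j - c)" unfolding D_def by blast
  then show ?thesis unfolding less_eq_vec_def by (auto dest: spec[of _ i])
qed

lemma wb_vec_intro:
  fixes x y :: "real ^ 'n"
  assumes xy: "\<forall>i. x $ i < y $ i"
  shows "way_below x y"
  unfolding way_below_def
proof (intro allI impI)
  fix D s assume h: "directed D \<and> is_sup D s \<and> y \<le> s"
  have one: "\<exists>d\<in>D. x $ i < d $ i" for i
  proof (rule ccontr)
    assume "\<not> (\<exists>d\<in>D. x $ i < d $ i)"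
    then have le: "\<forall>d\<in>D. d $ i \<le> x $ i" by auto
    define u where "u = (\<chi> j. if j = i then x $ i else s $ j)"
    have "\<forall>d\<in>D. d \<le> u"
    proof
      fix d assume dD: "d \<in> D"
      then have ds: "d \<le> s" using h unfolding is_sup_def by blast
      show "d \<le> u" unfolding less_eq_vec_def
      proof
        fix j show "d $ j \<le> u $ j"
        proof (cases "j = i")
          case True
          have "u $ j = x $ i" using True by (simp add: u_def)
          then show ?thesis using le dD True by simp
        next
          case False
          have "d $ j \<le> s $ j" using ds unfolding less_eq_vec_def by blast
          then show ?thesis using False by (simp add: u_def)
        qed
      qed
    qed
    then have "s \<le> u" using h unfolding is_sup_def by blast
    then have "s $ i \<le> u $ i" unfolding less_eq_vec_def by blast
    then have "s $ i \<le> x $ i" by (simp add: u_def)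
    moreover have "y $ i \<le> s $ i" using h unfolding less_eq_vec_def by blast
    moreover have "x $ i < y $ i" using xy by blast
    ultimately show False by linarith
  qed
  have "\<exists>d\<in>D. \<forall>i\<in>F. x $ i < d $ i" if "finite F" for F
    using that
  proof (induction F rule: finite_induct)
    case empty
    have "D \<noteq> {}" using h unfolding directed_def by blast
    then show ?case by blast
  next
    case (insert i F)
    then obtain d1 where d1: "d1 \<in> D" "\<forall>i\<in>F. x $ i < d1 $ i" by blast
    obtain d2 where d2: "d2 \<in> D" "x $ i < d2 $ i" using one by blast
    obtain d3 where d3: "d3 \<in> D" "d1 \<le> d3" "d2 \<le> d3" using h d1(1) d2(1) unfolding directed_def by blast
    have "\<forall>j\<in>insert i F. x $ j < d3 $ j"
    proof
      fix j assume "j \<in> insert i F"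
      then show "x $ j < d3 $ j"
      proof
        assume ji: "j = i"
        have "d2 $ i \<le> d3 $ i" using d3(3) unfolding less_eq_vec_def by blast
        then show ?thesis using d2(2) unfolding ji by linarith
      next
        assume jF: "j \<in> F"
        have "d1 $ j \<le> d3 $ j" using d3(2) unfolding less_eq_vec_def by blast
        moreover have "x $ j < d1 $ j" using d1(2) jF by blast
        ultimately show ?thesis by linarith
      qed
    qed
    then show ?case using d3(1) by blast
  qed
  from this[OF finite_class.finite_UNIV] obtain d where d: "d \<in> D" "\<forall>i\<in>UNIV. x $ i < d $ i" by blast
  have "x \<le> d" unfolding less_eq_vec_def using d(2) by (simp add: less_imp_le)
  then show "\<exists>d\<in>D. x \<le> d" using d(1) by blast
qed

lemma wb_vec: "way_below (x::real^'n) y \<longleftrightarrow> (\<forall>i. x $ i < y $ i)"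
  using wb_vec_imp wb_vec_intro by blast

lemma gap:
  fixes p x :: "real ^ 'n"
  assumes "\<forall>i. p $ i < x $ i"
  shows "\<exists>e>0. \<forall>i. e \<le> x $ i - p $ i"
proof -
  let ?A = "range (\<lambda>i. x $ i - p $ i)"
  have "finite ?A" by simp
  moreover have "?A \<noteq> {}" by simp
  ultimately have "0 < Min ?A" using assms by (simp add: Min_gr_iff)
  moreover have "\<forall>i. Min ?A \<le> x $ i - p $ i" using \<open>finite ?A\<close> by simp
  ultimately show ?thesis by blast
qed

lemma comp_close:
  fixes u p :: "real ^ 'n"
  assumes "dist u p < e"
  shows "\<bar>u $ i - p $ i\<bar> < e"
  using component_le_norm_cart[of "u - p" i] assms by (simp add: dist_norm)

lemma small_shift:
  fixes p :: "real ^ 'n"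
  assumes e: "e > 0"
  shows "\<exists>c>0. dist (p + (\<chi> i. c)) p < e"
proof -
  define c where "c = e / (2 * real CARD('n))"
  have cp: "c > 0" using e unfolding c_def by simp
  have "dist (p + (\<chi> i. c)) p = norm ((\<chi> i. c) :: real ^ 'n)" by (simp add: dist_norm)
  also have "\<dots> \<le> (\<Sum>i\<in>UNIV. \<bar>((\<chi> i. c) :: real ^ 'n) $ i\<bar>)" by (rule norm_le_l1_cart)
  also have "\<dots> = real CARD('n) * c" using cp by simp
  also have "\<dots> = e / 2" unfolding c_def by simp
  also have "\<dots> < e" using e by simp
  finally show ?thesis using cp by blast
qed

lemma cl_up:
  fixes U :: "(real ^ 'n) set"
  assumes U: "up_set U"
  shows "p \<in> closure U \<longleftrightarrow> (\<forall>x. (\<forall>i. p $ i < x $ i) \<longrightarrow> x \<in> U)"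
proof
  assume pc: "p \<in> closure U"
  show "\<forall>x. (\<forall>i. p $ i < x $ i) \<longrightarrow> x \<in> U"
  proof (intro allI impI)
    fix x assume px: "\<forall>i. p $ i < x $ i"
    obtain e where e: "e > 0" "\<forall>i. e \<le> x $ i - p $ i" using gap[OF px] by blast
    obtain u where u: "u \<in> U" "dist u p < e" using pc e(1) unfolding closure_approachable by blast
    have "u \<le> x" unfolding less_eq_vec_def
    proof
      fix i show "u $ i \<le> x $ i" using comp_close[OF u(2), of i] e(2)[rule_format, of i] by linarith
    qed
    then show "x \<in> U" using U u(1) unfolding up_set_def by blast
  qed
next
  assume h: "\<forall>x. (\<forall>i. p $ i < x $ i) \<longrightarrow> x \<in> U"
  show "p \<in> closure U" unfolding closure_approachable
  proof (intro allI impI)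
    fix e :: real assume "e > 0"
    then obtain c where c: "c > 0" "dist (p + (\<chi> i. c)) p < e" using small_shift by blast
    have "p + (\<chi> i. c) \<in> U" using h[rule_format, of "p + (\<chi> i. c)"] c(1) by simp
    then show "\<exists>y\<in>U. dist y p < e" using c(2) by blast
  qed
qed

lemma int_dn:
  fixes D :: "(real ^ 'n) set"
  assumes Dd: "down_set D"
  shows "p \<in> interior D \<longleftrightarrow> (\<exists>x. (\<forall>i. p $ i < x $ i) \<and> x \<in> D)"
proof
  assume "p \<in> interior D"
  then obtain e where e: "e > 0" "ball p e \<subseteq> D" unfolding mem_interior by blast
  obtain c where c: "c > 0" "dist (p + (\<chi> i. c)) p < e" using small_shift[OF e(1)] by blast
  have "p + (\<chi> i. c) \<in> D" using c(2) e(2) by (auto simp: dist_commute)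
  then show "\<exists>x. (\<forall>i. p $ i < x $ i) \<and> x \<in> D" using c(1) by (intro exI[of _ "p + (\<chi> i. c)"]) simp
next
  assume "\<exists>x. (\<forall>i. p $ i < x $ i) \<and> x \<in> D"
  then obtain x where x: "\<forall>i. p $ i < x $ i" "x \<in> D" by blast
  obtain e where e: "e > 0" "\<forall>i. e \<le> x $ i - p $ i" using gap[OF x(1)] by blast
  have "ball p e \<subseteq> D"
  proof
    fix u assume "u \<in> ball p e"
    then have u: "dist u p < e" by (simp add: dist_commute)
    have "u \<le> x" unfolding less_eq_vec_def
    proof
      fix i show "u $ i \<le> x $ i" using comp_close[OF u, of i] e(2)[rule_format, of i] by linarith
    qed
    then show "u \<in> D" using Dd x(2) unfolding down_set_def by blast
  qed
  then show "p \<in> interior D" unfolding mem_interior using e(1) by blast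
qed

lemma part_i:
  fixes R :: "'a ring" and U :: "'p::order set"
  assumes R: "ring R" and c: "continuous_poset TYPE('p)" and U: "up_set U"
  shows "pmod_iso R (upper_pmod (indicator_pmod R U)) (indicator_pmod R (scott_topology interior_of U))"
proof (rule upper_generic[OF R])
  show "\<And>p::'p. directed {x. way_below x p}" by (rule cont_dir[OF c])
  show "\<And>p q x::'p. p \<le> q \<Longrightarrow> way_below x p \<Longrightarrow> way_below x q" using wb_mono_right by blast
next
  fix p assume "p \<in> scott_topology interior_of U"
  then have "\<exists>x. way_below x p \<and> x \<in> U" using scott_interior[OF c U] by blast
  moreover have "\<forall>x\<in>{x. way_below x p}. \<forall>y\<in>{x. way_below x p}. x \<in> U \<and> x \<le> y \<longrightarrow> y \<in> U"
    using U unfolding up_set_def by blast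
  ultimately show "(\<forall>x\<in>{x. way_below x p}. \<forall>y\<in>{x. way_below x p}. x \<in> U \<and> x \<le> y \<longrightarrow> y \<in> U)
                 \<and> (\<exists>x0. x0 \<in> {x. way_below x p} \<and> x0 \<in> U)" by blast
next
  fix p assume "p \<notin> scott_topology interior_of U"
  then have "\<not> (\<exists>x. way_below x p \<and> x \<in> U)" using scott_interior[OF c U] by blast
  then show "\<forall>x\<in>{x. way_below x p}. x \<in> U \<longrightarrow> (\<exists>z\<in>{x. way_below x p}. x \<le> z \<and> z \<notin> U)" by blast
qed

lemma part_ii:
  fixes R :: "'a ring" and D :: "'p::order set"
  assumes R: "ring R" and c: "continuous_poset TYPE('p)" and Dd: "down_set D"
  shows "pmod_iso R (upper_pmod (indicator_pmod R D)) (indicator_pmod R (scott_topology closure_of D))"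
proof (rule upper_generic[OF R])
  show "\<And>p::'p. directed {x. way_below x p}" by (rule cont_dir[OF c])
  show "\<And>p q x::'p. p \<le> q \<Longrightarrow> way_below x p \<Longrightarrow> way_below x q" using wb_mono_right by blast
next
  fix p assume "p \<in> scott_topology closure_of D"
  then have all: "\<forall>x. way_below x p \<longrightarrow> x \<in> D" using scott_closure[OF c Dd] by blast
  obtain x0 where "way_below x0 p" using cont_dir[OF c, of p] unfolding directed_def by blast
  then show "(\<forall>x\<in>{x. way_below x p}. \<forall>y\<in>{x. way_below x p}. x \<in> D \<and> x \<le> y \<longrightarrow> y \<in> D)
                 \<and> (\<exists>x0. x0 \<in> {x. way_below x p} \<and> x0 \<in> D)" using all by blast
next
  fix p assume "p \<notin> scott_topology closure_of D"
  then obtain w where w: "way_below w p" "w \<notin> D" using scott_closure[OF c Dd] by blast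
  show "\<forall>x\<in>{x. way_below x p}. x \<in> D \<longrightarrow> (\<exists>z\<in>{x. way_below x p}. x \<le> z \<and> z \<notin> D)"
  proof (intro ballI impI)
    fix x assume "x \<in> {x. way_below x p}"
    then obtain z where z: "way_below z p" "x \<le> z" "w \<le> z"
      using cont_dir[OF c, of p] w(1) unfolding directed_def by blast
    have "z \<notin> D" using z(3) w(2) Dd unfolding down_set_def by blast
    then show "\<exists>z\<in>{x. way_below x p}. x \<le> z \<and> z \<notin> D" using z by blast
  qed
qed

lemma vec_min_V:
  fixes p x y :: "real ^ 'n"
  assumes "way_below p x" "way_below p y"
  shows "way_below p (\<chi> i. min (x $ i) (y $ i)) \<and> (\<chi> i. min (x $ i) (y $ i)) \<le> x \<and> (\<chi> i. min (x $ i) (y $ i)) \<le> y"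
  using assms unfolding wb_vec less_eq_vec_def by simp

lemma part_iii:
  fixes R :: "'a ring" and U :: "(real ^ 'n) set"
  assumes R: "ring R" and U: "up_set U"
  shows "pmod_iso R (lower_pmod (indicator_pmod R U)) (indicator_pmod R (closure U))"
proof (rule lower_generic[OF R])
  show "\<And>p::real^'n. \<forall>x\<in>{x. way_below p x}. \<forall>y\<in>{x. way_below p x}. \<exists>z\<in>{x. way_below p x}. z \<le> x \<and> z \<le> y"
    using vec_min_V by blast
  show "\<And>p q x::real^'n. p \<le> q \<Longrightarrow> way_below q x \<Longrightarrow> way_below p x" using wb_mono_left by blast
next
  fix p :: "real ^ 'n" assume "p \<in> closure U"
  then have all: "\<forall>x. way_below p x \<longrightarrow> x \<in> U" using cl_up[OF U] wb_vec by blast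
  have "way_below p (p + (\<chi> i. 1))" unfolding wb_vec by simp
  then show "(\<forall>x\<in>{x. way_below p x}. \<forall>y\<in>{x. way_below p x}. y \<in> U \<and> x \<le> y \<longrightarrow> x \<in> U)
                 \<and> (\<exists>x0. x0 \<in> {x. way_below p x} \<and> x0 \<in> U)" using all by blast
next
  fix p :: "real ^ 'n" assume "p \<notin> closure U"
  then obtain w where w: "way_below p w" "w \<notin> U" using cl_up[OF U] wb_vec by blast
  show "\<forall>y\<in>{x. way_below p x}. \<exists>z\<in>{x. way_below p x}. z \<le> y \<and> z \<notin> U"
  proof
    fix y assume "y \<in> {x. way_below p x}"
    then have m: "way_below p (\<chi> i. min (w $ i) (y $ i)) \<and> (\<chi> i. min (w $ i) (y $ i)) \<le> w \<and> (\<chi> i. min (w $ i) (y $ i)) \<le> y"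
      using vec_min_V[OF w(1)] by blast
    then have "(\<chi> i. min (w $ i) (y $ i)) \<notin> U" using w(2) U unfolding up_set_def by blast
    then show "\<exists>z\<in>{x. way_below p x}. z \<le> y \<and> z \<notin> U" using m by blast
  qed
qed

lemma part_iv:
  fixes R :: "'a ring" and D :: "(real ^ 'n) set"
  assumes R: "ring R" and Dd: "down_set D"
  shows "pmod_iso R (lower_pmod (indicator_pmod R D)) (indicator_pmod R (interior D))"
proof (rule lower_generic[OF R])
  show "\<And>p::real^'n. \<forall>x\<in>{x. way_below p x}. \<forall>y\<in>{x. way_below p x}. \<exists>z\<in>{x. way_below p x}. z \<le> x \<and> z \<le> y"
    using vec_min_V by blast
  show "\<And>p q x::real^'n. p \<le> q \<Longrightarrow> way_below q x \<Longrightarrow> way_below p x" using wb_mono_left by blast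
next
  fix p :: "real ^ 'n" assume "p \<in> interior D"
  then have "\<exists>x. way_below p x \<and> x \<in> D" using int_dn[OF Dd] wb_vec by blast
  moreover have "\<forall>x\<in>{x. way_below p x}. \<forall>y\<in>{x. way_below p x}. y \<in> D \<and> x \<le> y \<longrightarrow> x \<in> D"
    using Dd unfolding down_set_def by blast
  ultimately show "(\<forall>x\<in>{x. way_below p x}. \<forall>y\<in>{x. way_below p x}. y \<in> D \<and> x \<le> y \<longrightarrow> x \<in> D)
                 \<and> (\<exists>x0. x0 \<in> {x. way_below p x} \<and> x0 \<in> D)" by blast
next
  fix p :: "real ^ 'n" assume "p \<notin> interior D"
  then have "\<forall>x. way_below p x \<longrightarrow> x \<notin> D" using int_dn[OF Dd] wb_vec by blast
  then show "\<forall>y\<in>{x. way_below p x}. \<exists>z\<in>{x. way_below p x}. z \<le> y \<and> z \<notin> D" by blast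
qed

theorem mainTheorem8:
  fixes R :: "'a ring"
  assumes "cring R"
    and "continuous_poset TYPE('p::order)"
  shows "(\<forall>U :: 'p set. up_set U \<longrightarrow>
            pmod_iso R (upper_pmod (indicator_pmod R U))
                       (indicator_pmod R (scott_topology interior_of U)))
       \<and> (\<forall>D :: 'p set. down_set D \<longrightarrow>
            pmod_iso R (upper_pmod (indicator_pmod R D))
                       (indicator_pmod R (scott_topology closure_of D)))
       \<and> (\<forall>U :: (real ^ 'n) set. up_set U \<longrightarrow>
            pmod_iso R (lower_pmod (indicator_pmod R U)) (indicator_pmod R (closure U)))
       \<and> (\<forall>D :: (real ^ 'n) set. down_set D \<longrightarrow>
            pmod_iso R (lower_pmod (indicator_pmod R D)) (indicator_pmod R (interior D)))"
proof -
  have R: "ring R" using assms(1) by (rule cring.axioms(1))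
  show ?thesis
    using part_i[OF R assms(2)] part_ii[OF R assms(2)] part_iii[OF R] part_iv[OF R] by blast
qed

end
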